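(* Let $A,B\in\widehat\Xi_d$ and write $[B]*[A]=\sum_{C\in\widehat\Xi_d}Q^C_{B,A}[C]$ in $\widehat{\mathbb S}_d$. Suppose $B=\sum_{j=1}^n(\beta_jE^{j,j}+\alpha_jE^{j,j+1})$ or $B=\sum_{j=1}^n(\beta_jE^{j,j}+\alpha_jE^{j+1,j})$ for some $\alpha_j,\beta_j\in\mathbb Z_{\ge0}$. If $Q^C_{B,A}\neq0$, then $\varepsilon_i(C)=\varepsilon_i(A)+\varepsilon_i(B)$ for all $i\in\mathbb Z$.
   Context: Fix $n\ge1$, $d\ge0$, $\mathbb A=\mathbb Z[v,v^{-1}]$. $\widehat\Xi_d$ is the set of $\mathbb Z\times\mathbb Z$ matrices $A=(a_{ij})$ with $a_{ij}\in\mathbb Z_{\ge0}$, $a_{i+n,j+n}=a_{ij}$ and $\sum_{1\le i\le n,\,j\in\mathbb Z}a_{ij}=d$. $E^{i,j}$ is the $\mathbb Z\times\mathbb Z$ matrix with $(k,l)$-entry $1$ if $(k,l)=(i+pn,j+pn)$ for some $p\in\mathbb Z$ and $0$ otherwise. $\widehat{\mathbb S}_d$ is the generic affine $v$-Schur algebra: the free $\mathbb A$-algebra with basis $\{e_A\}_{A\in\widehat\Xi_d}$ whose structure constants specialize at $v=\sqrt q$ to those of the convolution algebra of $GL_d(\mathbb F_q((\varepsilon)))$-invariant functions on pairs of periodic lattice chains (of period $n$) with respect to characteristic functions of orbits, orbits being indexed by $\widehat\Xi_d$ via $a_{ij}=\dim\frac{\mathbf L_i\cap\mathbf L'_j}{\mathbf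 L_{i-1}\cap\mathbf L'_j+\mathbf L_i\cap\mathbf L'_{j-1}}$. The standard basis is $[A]=v^{-d_A}e_A$ with $d_A=\sum_{1\le i\le n,\ i\ge k,\ j<l}a_{ij}a_{kl}$. For $i\in\mathbb Z$, $\varepsilon_i(A)=\sum_{r\le i<s}a_{rs}-\sum_{r>i\ge s}a_{rs}$. *)

theory Defs
  imports "HOL-Computational_Algebra.Formal_Laurent_Series"
begin

(* Vectors of V = F^d with F = k((eps)), k a finite field; a vector is a function
   nat => k fls vanishing outside {..<d}. *)
definition vecs :: "nat \<Rightarrow> (nat \<Rightarrow> 'a::field fls) set" where
  "vecs d = {x. \<forall>k\<ge>d. x k = 0}"

definition intO :: "'a::field fls set" where
  "intO = {c. \<forall>m<0. fls_nth c m = 0}"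

definition vadd :: "(nat \<Rightarrow> 'a::field fls) \<Rightarrow> (nat \<Rightarrow> 'a fls) \<Rightarrow> nat \<Rightarrow> 'a fls" where
  "vadd x y = (\<lambda>k. x k + y k)"

definition std_lat :: "nat \<Rightarrow> int \<Rightarrow> (nat \<Rightarrow> 'a::field fls) set" where
  "std_lat d N = {x \<in> vecs d. \<forall>k<d. \<forall>m<N. fls_nth (x k) m = 0}"

definition is_lattice :: "nat \<Rightarrow> (nat \<Rightarrow> 'a::field fls) set \<Rightarrow> bool" where
  "is_lattice d L \<longleftrightarrow> L \<subseteq> vecs d \<and> (\<lambda>k. 0) \<in> L \<and>
     (\<forall>x\<in>L. \<forall>y\<in>L. vadd x y \<in> L) \<and>
     (\<forall>c\<in>intO. \<forall>x\<in>L. (\<lambda>k. c * x k) \<in> L) \<and>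
     (\<exists>N::int. std_lat d N \<subseteq> L \<and> L \<subseteq> std_lat d (- N))"

definition lchain :: "nat \<Rightarrow> nat \<Rightarrow> (int \<Rightarrow> (nat \<Rightarrow> 'a::field fls) set) \<Rightarrow> bool" where
  "lchain n d L \<longleftrightarrow> (\<forall>i. is_lattice d (L i)) \<and> (\<forall>i. L (i - 1) \<subseteq> L i) \<and>
     (\<forall>i. L (i + int n) = (\<lambda>x. (\<lambda>k. fls_X_inv * x k)) ` L i)"

definition msum :: "(nat \<Rightarrow> 'a::field fls) set \<Rightarrow> (nat \<Rightarrow> 'a fls) set \<Rightarrow> (nat \<Rightarrow> 'a fls) set" where
  "msum X Y = {vadd x y | x y. x \<in> X \<and> y \<in> Y}"

(* F_q-dimension of the finite quotient X/Y, q = card UNIV: q^dim = #(X/Y) *)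
definition qdim :: "(nat \<Rightarrow> 'a::{field,finite} fls) set \<Rightarrow> (nat \<Rightarrow> 'a fls) set \<Rightarrow> nat" where
  "qdim X Y = (THE a. card ((\<lambda>x. vadd x ` Y) ` X) = card (UNIV :: 'a set) ^ a)"

definition relpos :: "(int \<Rightarrow> (nat \<Rightarrow> 'a::{field,finite} fls) set) \<Rightarrow> (int \<Rightarrow> (nat \<Rightarrow> 'a fls) set)
    \<Rightarrow> int \<Rightarrow> int \<Rightarrow> nat" where
  "relpos L L' i j = qdim (L i \<inter> L' j) (msum (L (i - 1) \<inter> L' j) (L i \<inter> L' (j - 1)))"

definition Xi :: "nat \<Rightarrow> nat \<Rightarrow> (int \<Rightarrow> int \<Rightarrow> nat) \<Rightarrow> bool" where
  "Xi n d A \<longleftrightarrow> (\<forall>i j. A (i + int n) (j + int n) = A i j) \<and>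
     finite {(i, j). 1 \<le> i \<and> i \<le> int n \<and> A i j \<noteq> 0} \<and>
     (\<Sum>(i, j)\<in>{(i, j). 1 \<le> i \<and> i \<le> int n \<and> A i j \<noteq> 0}. A i j) = d"

definition Emat :: "nat \<Rightarrow> int \<Rightarrow> int \<Rightarrow> int \<Rightarrow> int \<Rightarrow> nat" where
  "Emat n i j k l = (if \<exists>p::int. k = i + p * int n \<and> l = j + p * int n then 1 else 0)"

definition eps :: "(int \<Rightarrow> int \<Rightarrow> nat) \<Rightarrow> int \<Rightarrow> int" where
  "eps A i = (\<Sum>(r, s)\<in>{(r, s). r \<le> i \<and> i < s \<and> A r s \<noteq> 0}. int (A r s))
           - (\<Sum>(r, s)\<in>{(r, s). i < r \<and> s \<le> i \<and> A r s \<noteq> 0}. int (A r s))"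

(* Structure constant of the convolution algebra over k = 'a (q = card UNIV):
   e_B * e_A = \<Sum>_C count(B,A,C) e_C, with
   count(B,A,C) = #{L''. (L,L'') \<in> O_B, (L'',L') \<in> O_A} for a fixed (L,L') \<in> O_C. *)
definition struct_count :: "'a::{field,finite} itself \<Rightarrow> nat \<Rightarrow> nat \<Rightarrow>
    (int \<Rightarrow> int \<Rightarrow> nat) \<Rightarrow> (int \<Rightarrow> int \<Rightarrow> nat) \<Rightarrow> (int \<Rightarrow> int \<Rightarrow> nat) \<Rightarrow> nat" where
  "struct_count _ n d B A C =
     (let P = (SOME P :: (int \<Rightarrow> (nat \<Rightarrow> 'a fls) set) \<times> (int \<Rightarrow> (nat \<Rightarrow> 'a fls) set).
                 lchain n d (fst P) \<and> lchain n d (snd P) \<and> relpos (fst P) (snd P) = C)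
      in card {L''. lchain n d L'' \<and> relpos (fst P) L'' = B \<and> relpos L'' (snd P) = A})"

end

theory Submission
  imports Defs "HOL-Library.Function_Algebras" "HOL-Library.FuncSet" "HOL-Library.Multiset"
begin

definition sp :: "'v::ab_group_add set \<Rightarrow> 'v set \<Rightarrow> 'v set" where
  "sp A B = {a + b | a b. a \<in> A \<and> b \<in> B}"

definition subgrp :: "'v::ab_group_add set \<Rightarrow> bool" where
  "subgrp Y \<longleftrightarrow> 0 \<in> Y \<and> (\<forall>x\<in>Y. \<forall>y\<in>Y. x + y \<in> Y) \<and> (\<forall>x\<in>Y. - x \<in> Y)"

definition cos :: "'v::ab_group_add set \<Rightarrow> 'v set \<Rightarrow> 'v set set" where
  "cos X Y = (\<lambda>x. (+) x ` Y) ` X"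

lemma subgrp_diff: "subgrp Y \<Longrightarrow> x \<in> Y \<Longrightarrow> y \<in> Y \<Longrightarrow> x - y \<in> Y"
  unfolding subgrp_def by (metis diff_conv_add_uminus)

lemma subgrp_add: "subgrp Y \<Longrightarrow> x \<in> Y \<Longrightarrow> y \<in> Y \<Longrightarrow> x + y \<in> Y"
  unfolding subgrp_def by blast

lemma subgrp_0: "subgrp Y \<Longrightarrow> 0 \<in> Y"
  unfolding subgrp_def by blast

lemma coset_eq:
  assumes "subgrp Y"
  shows "((+) x ` Y = (+) x' ` Y) \<longleftrightarrow> x - x' \<in> Y"
proof
  assume h: "(+) x ` Y = (+) x' ` Y"
  have "x \<in> (+) x ` Y" using subgrp_0[OF assms] by force
  then obtain y where "y \<in> Y" "x = x' + y" using h by auto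
  then show "x - x' \<in> Y" by (simp add: algebra_simps)
next
  assume h: "x - x' \<in> Y"
  show "(+) x ` Y = (+) x' ` Y"
  proof (intro set_eqI iffI)
    fix z assume "z \<in> (+) x ` Y"
    then obtain y where y: "y \<in> Y" "z = x + y" by auto
    have "(x - x') + y \<in> Y" using subgrp_add[OF assms h y(1)] .
    moreover have "z = x' + ((x - x') + y)" using y by (simp add: algebra_simps)
    ultimately show "z \<in> (+) x' ` Y" by blast
  next
    fix z assume "z \<in> (+) x' ` Y"
    then obtain y where y: "y \<in> Y" "z = x' + y" by auto
    have "y - (x - x') \<in> Y" using subgrp_diff[OF assms y(1) h] .
    moreover have "z = x + (y - (x - x'))" using y by (simp add: algebra_simps)
    ultimately show "z \<in> (+) x ` Y" by blast
  qed
qed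

lemma card_image_eqrel:
  assumes "\<And>x x'. x \<in> X \<Longrightarrow> x' \<in> X \<Longrightarrow> g x = g x' \<longleftrightarrow> f x = f x'"
  shows "card (g ` X) = card (f ` X) \<and> (finite (g ` X) \<longleftrightarrow> finite (f ` X))"
proof -
  have b: "bij_betw (\<lambda>y. g (inv_into X f y)) (f ` X) (g ` X)"
  proof (rule bij_betw_imageI)
    show "inj_on (\<lambda>y. g (inv_into X f y)) (f ` X)"
    proof (rule inj_onI)
      fix y y' assume "y \<in> f ` X" "y' \<in> f ` X" and e: "g (inv_into X f y) = g (inv_into X f y')"
      then obtain x x' where xx: "x \<in> X" "x' \<in> X" "y = f x" "y' = f x'" by auto
      have i1: "inv_into X f y \<in> X" "f (inv_into X f y) = y" using xx by (auto intro: inv_into_into f_inv_into_f)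
      have i2: "inv_into X f y' \<in> X" "f (inv_into X f y') = y'" using xx by (auto intro: inv_into_into f_inv_into_f)
      show "y = y'" using assms[OF i1(1) i2(1)] e i1 i2 by simp
    qed
    show "(\<lambda>y. g (inv_into X f y)) ` f ` X = g ` X"
    proof (intro set_eqI iffI)
      fix z assume "z \<in> (\<lambda>y. g (inv_into X f y)) ` f ` X"
      then obtain x where x: "x \<in> X" "z = g (inv_into X f (f x))" by auto
      then show "z \<in> g ` X" by (auto intro: inv_into_into)
    next
      fix z assume "z \<in> g ` X"
      then obtain x where x: "x \<in> X" "z = g x" by auto
      have "inv_into X f (f x) \<in> X" "f (inv_into X f (f x)) = f x" using x by (auto intro: inv_into_into f_inv_into_f)
      then have "g (inv_into X f (f x)) = g x" using assms x by blast
      then show "z \<in> (\<lambda>y. g (inv_into X f y)) ` f ` X" using x by force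
    qed
  qed
  show ?thesis using bij_betw_same_card[OF b] bij_betw_finite[OF b] by simp
qed

lemma subgrp_Int: "subgrp A \<Longrightarrow> subgrp B \<Longrightarrow> subgrp (A \<inter> B)"
  unfolding subgrp_def by blast

lemma subgrp_sp: assumes "subgrp A" "subgrp B" shows "subgrp (sp A B)"
  unfolding subgrp_def sp_def
proof (intro conjI ballI)
  have "0 = (0::'a) + 0" by simp
  then show "0 \<in> {a + b |a b. a \<in> A \<and> b \<in> B}" using assms subgrp_0 by blast
next
  fix x y assume "x \<in> {a + b |a b. a \<in> A \<and> b \<in> B}" "y \<in> {a + b |a b. a \<in> A \<and> b \<in> B}"
  then obtain a b a' b' where "a \<in> A" "b \<in> B" "a' \<in> A" "b' \<in> B" "x = a + b" "y = a' + b'" by auto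
  moreover have "x + y = (a + a') + (b + b')" using calculation by (simp add: algebra_simps)
  ultimately show "x + y \<in> {a + b |a b. a \<in> A \<and> b \<in> B}" using assms subgrp_add by blast
next
  fix x assume "x \<in> {a + b |a b. a \<in> A \<and> b \<in> B}"
  then obtain a b where "a \<in> A" "b \<in> B" "x = a + b" by auto
  moreover have "- x = (-a) + (-b)" using calculation by simp
  ultimately show "- x \<in> {a + b |a b. a \<in> A \<and> b \<in> B}" using assms unfolding subgrp_def by blast
qed

lemma sp_sub: "subgrp X \<Longrightarrow> A \<subseteq> X \<Longrightarrow> B \<subseteq> X \<Longrightarrow> sp A B \<subseteq> X"
  unfolding sp_def using subgrp_add by blast

lemma sp_sup1: "subgrp B \<Longrightarrow> A \<subseteq> sp A B"
  unfolding sp_def using subgrp_0 by force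

lemma sp_sup2: "subgrp A \<Longrightarrow> B \<subseteq> sp A B"
  unfolding sp_def using subgrp_0 by force

lemma sp_id: "subgrp A \<Longrightarrow> subgrp B \<Longrightarrow> B \<subseteq> A \<Longrightarrow> sp A B = A"
  by (simp add: sp_sub sp_sup1 subset_antisym)

lemma modular:
  assumes "subgrp A" "subgrp U" "subgrp V" "U \<subseteq> A"
  shows "A \<inter> sp U V = sp U (A \<inter> V)"
proof (intro set_eqI iffI)
  fix z assume "z \<in> A \<inter> sp U V"
  then obtain u v where uv: "u \<in> U" "v \<in> V" "z = u + v" "z \<in> A" unfolding sp_def by auto
  have "v = z - u" using uv by simp
  then have "v \<in> A" using subgrp_diff[OF assms(1)] uv assms(4) by blast
  then show "z \<in> sp U (A \<inter> V)" using uv unfolding sp_def by blast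
next
  fix z assume "z \<in> sp U (A \<inter> V)"
  then obtain u v where uv: "u \<in> U" "v \<in> A" "v \<in> V" "z = u + v" unfolding sp_def by auto
  then show "z \<in> A \<inter> sp U V" using subgrp_add[OF assms(1)] assms(4) unfolding sp_def by blast
qed

lemma iso2:
  assumes "subgrp A" "subgrp B"
  shows "card (cos (sp A B) B) = card (cos A (A \<inter> B)) \<and> (finite (cos (sp A B) B) \<longleftrightarrow> finite (cos A (A \<inter> B)))"
proof -
  have e1: "cos (sp A B) B = (\<lambda>a. (+) a ` B) ` A"
  proof (intro set_eqI iffI)
    fix c assume "c \<in> cos (sp A B) B"
    then obtain a b where ab: "a \<in> A" "b \<in> B" "c = (+) (a + b) ` B" unfolding cos_def sp_def by auto
    have "(+) (a + b) ` B = (+) a ` B" using coset_eq[OF assms(2)] ab by simp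
    then show "c \<in> (\<lambda>a. (+) a ` B) ` A" using ab by auto
  next
    fix c assume "c \<in> (\<lambda>a. (+) a ` B) ` A"
    then obtain a where "a \<in> A" "c = (+) a ` B" by auto
    then show "c \<in> cos (sp A B) B" unfolding cos_def using sp_sup1[OF assms(2)] by auto
  qed
  have "\<And>x x'. x \<in> A \<Longrightarrow> x' \<in> A \<Longrightarrow> (+) x ` B = (+) x' ` B \<longleftrightarrow> (+) x ` (A \<inter> B) = (+) x' ` (A \<inter> B)"
    using coset_eq[OF assms(2)] coset_eq[OF subgrp_Int[OF assms]] subgrp_diff[OF assms(1)] by blast
  then have "card ((\<lambda>a. (+) a ` B) ` A) = card ((\<lambda>a. (+) a ` (A \<inter> B)) ` A) \<and>
     (finite ((\<lambda>a. (+) a ` B) ` A) \<longleftrightarrow> finite ((\<lambda>a. (+) a ` (A \<inter> B)) ` A))"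
    by (rule card_image_eqrel)
  then show ?thesis unfolding e1 by (simp add: cos_def)
qed

lemma tower:
  assumes "subgrp X" "subgrp Y" "subgrp Z" "Z \<subseteq> Y" "Y \<subseteq> X" "finite (cos X Z)"
  shows "card (cos X Z) = card (cos X Y) * card (cos Y Z)" "finite (cos X Y)" "finite (cos Y Z)"
proof -
  show fYZ: "finite (cos Y Z)" using assms(5,6) unfolding cos_def by (meson finite_subset image_mono)
  have e: "cos X Y = (\<lambda>c. sp c Y) ` cos X Z"
  proof -
    have "\<And>x. x \<in> X \<Longrightarrow> sp ((+) x ` Z) Y = (+) x ` Y"
    proof -
      fix x assume "x \<in> X"
      show "sp ((+) x ` Z) Y = (+) x ` Y"
      proof (intro set_eqI iffI)
        fix w assume "w \<in> sp ((+) x ` Z) Y"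
        then obtain z y where "z \<in> Z" "y \<in> Y" "w = x + z + y" unfolding sp_def by auto
        moreover have "z + y \<in> Y" using calculation assms subgrp_add by blast
        ultimately show "w \<in> (+) x ` Y" by (metis add.assoc image_eqI)
      next
        fix w assume "w \<in> (+) x ` Y"
        then obtain y where "y \<in> Y" "w = x + 0 + y" by auto
        then show "w \<in> sp ((+) x ` Z) Y" unfolding sp_def using subgrp_0[OF assms(3)] by blast
      qed
    qed
    then show ?thesis unfolding cos_def by (auto simp: image_image)
  qed
  show fXY: "finite (cos X Y)" using e assms(6) by simp
  define F where "F D = {c \<in> cos X Z. c \<subseteq> D}" for D
  have U: "cos X Z = (\<Union>D\<in>cos X Y. F D)"
  proof (intro set_eqI iffI)
    fix c assume "c \<in> cos X Z"
    then obtain x where x: "x \<in> X" "c = (+) x ` Z" unfolding cos_def by auto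
    then have "c \<subseteq> (+) x ` Y" using assms(4) by auto
    then show "c \<in> (\<Union>D\<in>cos X Y. F D)" unfolding F_def cos_def using x \<open>c \<in> cos X Z\<close> by blast
  qed (auto simp: F_def)
  have disj: "\<forall>D\<in>cos X Y. \<forall>D'\<in>cos X Y. D \<noteq> D' \<longrightarrow> F D \<inter> F D' = {}"
  proof (intro ballI impI)
    fix D D' assume D: "D \<in> cos X Y" "D' \<in> cos X Y" "D \<noteq> D'"
    show "F D \<inter> F D' = {}"
    proof (rule ccontr)
      assume "F D \<inter> F D' \<noteq> {}"
      then obtain c where c: "c \<in> cos X Z" "c \<subseteq> D" "c \<subseteq> D'" unfolding F_def by auto
      then obtain x where x: "x \<in> X" "c = (+) x ` Z" unfolding cos_def by auto
      have "x \<in> c" using x subgrp_0[OF assms(3)] by force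
      obtain a a' where a: "a \<in> X" "D = (+) a ` Y" "a' \<in> X" "D' = (+) a' ` Y" using D unfolding cos_def by auto
      have "x \<in> (+) a ` Y" "x \<in> (+) a' ` Y" using \<open>x \<in> c\<close> c a by auto
      then obtain y y' where "y \<in> Y" "y' \<in> Y" "x = a + y" "x = a' + y'" by auto
      then have "a - a' = y' - y" by (simp add: algebra_simps)
      then have "a - a' \<in> Y" using subgrp_diff[OF assms(2)] \<open>y \<in> Y\<close> \<open>y' \<in> Y\<close> by simp
      then have "D = D'" using coset_eq[OF assms(2)] a by simp
      then show False using D by simp
    qed
  qed
  have cardF: "\<forall>D\<in>cos X Y. card (F D) = card (cos Y Z)"
  proof
    fix D assume "D \<in> cos X Y"
    then obtain a where a: "a \<in> X" "D = (+) a ` Y" unfolding cos_def by auto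
    have "F D = (\<lambda>c. (+) a ` c) ` cos Y Z"
    proof (intro set_eqI iffI)
      fix c assume "c \<in> F D"
      then obtain x where x: "x \<in> X" "c = (+) x ` Z" "c \<subseteq> (+) a ` Y" unfolding F_def cos_def a by auto
      have "x \<in> c" using x subgrp_0[OF assms(3)] by force
      then obtain y where y: "y \<in> Y" "x = a + y" using x by auto
      have "c = (+) a ` ((+) y ` Z)" using x y by (auto simp: image_image add.assoc)
      then show "c \<in> (\<lambda>c. (+) a ` c) ` cos Y Z" using y unfolding cos_def by blast
    next
      fix c assume "c \<in> (\<lambda>c. (+) a ` c) ` cos Y Z"
      then obtain y where y: "y \<in> Y" "c = (+) a ` ((+) y ` Z)" unfolding cos_def by auto
      then have c: "c = (+) (a + y) ` Z" by (auto simp: image_image add.assoc)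
      have "a + y \<in> X" using y a assms(5) subgrp_add[OF assms(1)] by blast
      moreover have "c \<subseteq> D" using c a y assms(4) subgrp_add[OF assms(2)] by (auto simp: add.assoc)
      ultimately show "c \<in> F D" unfolding F_def cos_def using c by blast
    qed
    moreover have "inj_on (\<lambda>c. (+) a ` c) (cos Y Z)"
      by (rule inj_onI) (simp add: inj_image_eq_iff)
    ultimately show "card (F D) = card (cos Y Z)" by (simp add: card_image)
  qed
  have finF: "\<forall>D\<in>cos X Y. finite (F D)" using assms(6) unfolding F_def by auto
  have "card (cos X Z) = (\<Sum>D\<in>cos X Y. card (F D))"
    unfolding U by (rule card_UN_disjoint[OF fXY finF disj])
  also have "\<dots> = card (cos X Y) * card (cos Y Z)" using cardF by simp
  finally show "card (cos X Z) = card (cos X Y) * card (cos Y Z)" .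
qed

lemma vadd_plus: "vadd x = (+) x"
  by (simp add: vadd_def fun_eq_iff)

lemma msum_sp: "msum A B = sp A B"
  unfolding msum_def sp_def vadd_plus by simp

lemma qdim_cos: "qdim X Y = (THE a. card (cos X Y) = card (UNIV :: 'a set) ^ a)"
  for X Y :: "(nat \<Rightarrow> 'a::{field,finite} fls) set"
  unfolding qdim_def cos_def vadd_plus by simp

lemma q_ge2: "card (UNIV :: 'a::{field,finite} set) \<ge> 2"
proof -
  have "card {0::'a, 1} = 2" by simp
  moreover have "card {0::'a, 1} \<le> card (UNIV :: 'a set)" by (rule card_mono) auto
  ultimately show ?thesis by simp
qed

lemma qdim_eq:
  fixes X Y :: "(nat \<Rightarrow> 'a::{field,finite} fls) set"
  assumes "card (cos X Y) = card (UNIV :: 'a set) ^ a"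
  shows "qdim X Y = a"
  unfolding qdim_cos
proof (rule the_equality)
  show "card (cos X Y) = card (UNIV :: 'a set) ^ a" by fact
  fix b assume "card (cos X Y) = card (UNIV :: 'a set) ^ b"
  then have "card (UNIV :: 'a set) ^ b = card (UNIV :: 'a set) ^ a" using assms by simp
  then show "b = a" using q_ge2[where 'a='a] by (simp add: power_inject_exp)
qed

definition sc :: "'a::field \<Rightarrow> (nat \<Rightarrow> 'a fls) \<Rightarrow> nat \<Rightarrow> 'a fls" where
  "sc c x = (\<lambda>k. fls_const c * x k)"

definition kcl :: "(nat \<Rightarrow> 'a::field fls) set \<Rightarrow> bool" where
  "kcl Y \<longleftrightarrow> (\<forall>c. \<forall>x\<in>Y. sc c x \<in> Y)"

lemma sc_add: "sc c x + sc c' x = sc (c + c') x"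
  by (simp add: sc_def fun_eq_iff fls_eq_iff algebra_simps)
lemma sc_add2: "sc c x + sc c y = sc c (x + y)"
  by (simp add: sc_def fun_eq_iff fls_eq_iff algebra_simps)
lemma sc_0: "sc 0 x = 0"
  by (simp add: sc_def fun_eq_iff)
lemma sc_1: "sc 1 x = x"
  by (simp add: sc_def fun_eq_iff)
lemma sc_neg: "- sc c x = sc (- c) x"
  by (simp add: sc_def fun_eq_iff fls_eq_iff)
lemma sc_sc: "sc c (sc c' x) = sc (c * c') x"
  by (simp add: sc_def fun_eq_iff fls_eq_iff)
lemma sc_diff: "sc c x - sc c' x = sc (c - c') x"
  by (simp add: sc_def fun_eq_iff fls_eq_iff algebra_simps)

lemma cos_self: "subgrp X \<Longrightarrow> cos X X = {X}"
proof -
  assume s: "subgrp X"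
  have "\<And>x. x \<in> X \<Longrightarrow> (+) x ` X = X"
    using coset_eq[OF s, of _ 0] by (simp add: image_ident)
  moreover have "X \<noteq> {}" using subgrp_0[OF s] by auto
  ultimately show ?thesis unfolding cos_def by auto
qed

lemma pow_q:
  fixes X Y :: "(nat \<Rightarrow> 'a::{field,finite} fls) set"
  assumes "subgrp X" "subgrp Y" "kcl X" "kcl Y" "Y \<subseteq> X" "finite (cos X Y)"
  shows "\<exists>a. card (cos X Y) = card (UNIV :: 'a set) ^ a"
  using assms
proof (induction "card (cos X Y)" arbitrary: Y rule: less_induct)
  case less
  show ?case
  proof (cases "X \<subseteq> Y")
    case True
    then have "Y = X" using less by auto
    then have "card (cos X Y) = card (UNIV :: 'a set) ^ 0" using cos_self[OF less.prems(1)] by simp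
    then show ?thesis by blast
  next
    case False
    then obtain x where x: "x \<in> X" "x \<notin> Y" by auto
    define ln where "ln = range (\<lambda>c. sc c x)"
    have sln: "subgrp ln" unfolding subgrp_def ln_def
    proof (intro conjI ballI)
      show "0 \<in> range (\<lambda>c. sc c x)" using sc_0[of x] by (metis rangeI)
    next
      fix a b assume "a \<in> range (\<lambda>c. sc c x)" "b \<in> range (\<lambda>c. sc c x)"
      then obtain c c' where "a = sc c x" "b = sc c' x" by blast
      then have "a + b = sc (c + c') x" by (simp add: sc_add)
      then show "a + b \<in> range (\<lambda>c. sc c x)" by blast
    next
      fix a assume "a \<in> range (\<lambda>c. sc c x)"
      then obtain c where "a = sc c x" by blast
      then have "- a = sc (- c) x" by (simp add: sc_neg)
      then show "- a \<in> range (\<lambda>c. sc c x)" by blast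
    qed
    have kln: "kcl ln" unfolding kcl_def ln_def by (auto simp: sc_sc)
    define Y' where "Y' = sp Y ln"
    have sY': "subgrp Y'" unfolding Y'_def by (rule subgrp_sp[OF less.prems(2) sln])
    have kY': "kcl Y'" unfolding kcl_def Y'_def sp_def
    proof (intro allI ballI)
      fix c w assume "w \<in> {a + b |a b. a \<in> Y \<and> b \<in> ln}"
      then obtain a b where ab: "a \<in> Y" "b \<in> ln" "w = a + b" by auto
      have "sc c w = sc c a + sc c b" using ab sc_add2 by metis
      moreover have "sc c a \<in> Y" "sc c b \<in> ln" using ab less.prems(4) kln unfolding kcl_def by auto
      ultimately show "sc c w \<in> {a + b |a b. a \<in> Y \<and> b \<in> ln}" by blast
    qed
    have lnX: "ln \<subseteq> X" unfolding ln_def using less.prems(3) x(1) unfolding kcl_def by auto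
    have Y'X: "Y' \<subseteq> X" unfolding Y'_def by (rule sp_sub[OF less.prems(1) less.prems(5) lnX])
    have YY': "Y \<subseteq> Y'" unfolding Y'_def by (rule sp_sup1[OF sln])
    have tw: "card (cos X Y) = card (cos X Y') * card (cos Y' Y)" "finite (cos X Y')"
      using tower[OF less.prems(1) sY' less.prems(2) YY' Y'X less.prems(6)] by auto
    have cY'Y: "cos Y' Y = (\<lambda>c. (+) (sc c x) ` Y) ` UNIV"
    proof (intro set_eqI iffI)
      fix D assume "D \<in> cos Y' Y"
      then obtain a c where ac: "a \<in> Y" "D = (+) (a + sc c x) ` Y" unfolding cos_def Y'_def sp_def ln_def by auto
      have "(a + sc c x) - sc c x \<in> Y" using ac by simp
      then have "D = (+) (sc c x) ` Y" using ac coset_eq[OF less.prems(2)] by blast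
      then show "D \<in> (\<lambda>c. (+) (sc c x) ` Y) ` UNIV" by blast
    next
      fix D assume "D \<in> (\<lambda>c. (+) (sc c x) ` Y) ` UNIV"
      then obtain c where c: "D = (+) (sc c x) ` Y" by auto
      have "sc c x \<in> Y'" unfolding Y'_def sp_def ln_def using subgrp_0[OF less.prems(2)] by force
      then show "D \<in> cos Y' Y" unfolding cos_def c by blast
    qed
    have inj: "inj (\<lambda>c. (+) (sc c x) ` Y)"
    proof (rule injI)
      fix c c' assume "(+) (sc c x) ` Y = (+) (sc c' x) ` Y"
      then have h: "sc (c - c') x \<in> Y" using coset_eq[OF less.prems(2)] sc_diff by metis
      show "c = c'"
      proof (rule ccontr)
        assume "c \<noteq> c'"
        then have "sc (inverse (c - c')) (sc (c - c') x) = x" by (simp add: sc_sc sc_1)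
        moreover have "sc (inverse (c - c')) (sc (c - c') x) \<in> Y" using h less.prems(4) unfolding kcl_def by blast
        ultimately show False using x by simp
      qed
    qed
    have cq: "card (cos Y' Y) = card (UNIV :: 'a set)" unfolding cY'Y using inj by (simp add: card_image)
    have pos: "card (cos X Y) > 0"
    proof -
      have "cos X Y \<noteq> {}" unfolding cos_def using subgrp_0[OF less.prems(1)] by auto
      then show ?thesis using less.prems(6) by (simp add: card_gt_0_iff)
    qed
    have lt: "card (cos X Y') < card (cos X Y)" using tw(1) cq q_ge2[where 'a='a] pos by simp
    obtain a where "card (cos X Y') = card (UNIV :: 'a set) ^ a"
      using less.hyps[OF lt less.prems(1) sY' less.prems(3) kY' Y'X tw(2)] by blast
    then have "card (cos X Y) = card (UNIV :: 'a set) ^ Suc a" using tw(1) cq by simp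
    then show ?thesis by blast
  qed
qed

definition Mon :: "nat \<Rightarrow> (nat \<Rightarrow> int) \<Rightarrow> (nat \<Rightarrow> 'a::field fls) set" where
  "Mon d h = {x \<in> vecs d. \<forall>k<d. \<forall>m<h k. fls_nth (x k) m = 0}"

lemma std_Mon: "std_lat d N = Mon d (\<lambda>_. N)"
  by (simp add: std_lat_def Mon_def)

lemma Mon_subgrp: "subgrp (Mon d h)"
  unfolding subgrp_def Mon_def vecs_def by auto

lemma Mon_kcl: "kcl (Mon d h)"
  unfolding kcl_def Mon_def vecs_def sc_def by auto

lemma Mon_Int: "Mon d h \<inter> Mon d h' = Mon d (\<lambda>k. max (h k) (h' k))"
  unfolding Mon_def by (auto simp: less_max_iff_disj)

lemma Mon_mono: "(\<And>k. k < d \<Longrightarrow> h' k \<le> h k) \<Longrightarrow> Mon d h \<subseteq> Mon d h'"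
  unfolding Mon_def by fastforce

lemma Mon_sp: "sp (Mon d h) (Mon d h') = Mon d (\<lambda>k. min (h k) (h' k))"
proof (intro set_eqI iffI)
  fix z assume "z \<in> sp (Mon d h) (Mon d h')"
  then show "z \<in> Mon d (\<lambda>k. min (h k) (h' k))" unfolding sp_def Mon_def vecs_def by auto
next
  fix z :: "nat \<Rightarrow> 'a fls" assume z: "z \<in> Mon d (\<lambda>k. min (h k) (h' k))"
  define x where "x = (\<lambda>k. if h k \<le> h' k then z k else 0)"
  define y where "y = (\<lambda>k. if h k \<le> h' k then 0 else z k)"
  have "z = x + y" by (simp add: x_def y_def fun_eq_iff)
  moreover have "x \<in> Mon d h" using z unfolding x_def Mon_def vecs_def by auto
  moreover have "y \<in> Mon d h'" using z unfolding y_def Mon_def vecs_def by auto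
  ultimately show "z \<in> sp (Mon d h) (Mon d h')" unfolding sp_def by blast
qed

lemma nth_X_inv_mult: "fls_nth (fls_X_inv * f) m = fls_nth f (m + 1)" for f :: "'a::field fls"
  by (simp add: fls_X_inv_times_conv_shift)

lemma nth_X_mult: "fls_nth (fls_X * f) m = fls_nth f (m - 1)" for f :: "'a::field fls"
  by (simp add: fls_X_times_conv_shift)

lemma X_inv_X: "fls_X_inv * (fls_X * f) = (f :: 'a::field fls)"
  by (simp add: fls_eq_iff nth_X_inv_mult nth_X_mult)

lemma Mon_T: "(\<lambda>x. \<lambda>k. fls_X_inv * x k) ` Mon d h = Mon d (\<lambda>k. h k - 1)"
proof (intro set_eqI iffI)
  fix y :: "nat \<Rightarrow> 'a fls" assume "y \<in> (\<lambda>x. \<lambda>k. fls_X_inv * x k) ` Mon d h"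
  then obtain x where x: "x \<in> Mon d h" "y = (\<lambda>k. fls_X_inv * x k)" by auto
  then show "y \<in> Mon d (\<lambda>k. h k - 1)" unfolding Mon_def vecs_def by (auto simp: nth_X_inv_mult)
next
  fix y :: "nat \<Rightarrow> 'a fls" assume y: "y \<in> Mon d (\<lambda>k. h k - 1)"
  define x where "x = (\<lambda>k. fls_X * y k)"
  have "x \<in> Mon d h" using y unfolding x_def Mon_def vecs_def by (auto simp: nth_X_mult)
  moreover have "y = (\<lambda>k. fls_X_inv * x k)" by (simp add: x_def X_inv_X)
  ultimately show "y \<in> (\<lambda>x. \<lambda>k. fls_X_inv * x k) ` Mon d h" by blast
qed

lemma Mon_intO: assumes "c \<in> intO" "x \<in> Mon d h" shows "(\<lambda>k. c * x k) \<in> Mon d h"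
proof -
  have c0: "c = 0 \<or> 0 \<le> fls_subdegree c" using assms(1) unfolding intO_def
    by (auto intro: fls_subdegree_ge0I)
  have "\<And>k m. k < d \<Longrightarrow> m < h k \<Longrightarrow> fls_nth (c * x k) m = 0"
  proof -
    fix k m assume km: "k < d" "m < h k"
    show "fls_nth (c * x k) m = 0"
    proof (cases "c = 0 \<or> x k = 0")
      case True then show ?thesis by auto
    next
      case False
      then have "h k \<le> fls_subdegree (x k)" using assms(2) km unfolding Mon_def
        by (auto intro!: fls_subdegree_geI)
      then show ?thesis using c0 False km by (intro fls_times_nth_eq0) auto
    qed
  qed
  then show ?thesis using assms(2) unfolding Mon_def vecs_def by auto
qed

lemma Mon_lattice: "is_lattice d (Mon d h)"
proof -
  define N where "N = (\<Sum>k<d. \<bar>h k\<bar>)"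
  have hN: "\<And>k. k < d \<Longrightarrow> \<bar>h k\<bar> \<le> N"
    unfolding N_def by (rule member_le_sum) auto
  have "std_lat d N \<subseteq> Mon d h" unfolding std_Mon
    by (rule Mon_mono) (use hN in fastforce)
  moreover have "Mon d h \<subseteq> std_lat d (- N)" unfolding std_Mon
    by (rule Mon_mono) (use hN in fastforce)
  moreover have "Mon d h \<subseteq> vecs d" unfolding Mon_def by auto
  moreover have "(\<lambda>k. 0) \<in> Mon d h" unfolding Mon_def vecs_def by auto
  moreover have "\<forall>x\<in>Mon d h. \<forall>y\<in>Mon d h. vadd x y \<in> Mon d h"
    using Mon_subgrp[of d h] unfolding subgrp_def vadd_plus by auto
  moreover have "\<forall>c\<in>intO. \<forall>x\<in>Mon d h. (\<lambda>k. c * x k) \<in> Mon d h" using Mon_intO by blast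
  ultimately show ?thesis unfolding is_lattice_def by blast
qed

lemma Mon_card:
  assumes hh: "\<And>k. k < d \<Longrightarrow> h k \<le> h' k"
  shows "card (cos (Mon d h) (Mon d h' :: (nat \<Rightarrow> 'a::{field,finite} fls) set)) =
    card (UNIV :: 'a set) ^ (\<Sum>k<d. nat (h' k - h k))"
proof -
  define D where "D = Sigma {..<d} (\<lambda>k. {h k..<h' k})"
  define tr where "tr x = (\<lambda>z. if z \<in> D then fls_nth (x (fst z)) (snd z) else undefined)"
    for x :: "nat \<Rightarrow> 'a fls"
  have rel: "(+) x ` Mon d h' = (+) x' ` Mon d h' \<longleftrightarrow> tr x = tr x'"
    if x: "x \<in> Mon d h" "x' \<in> Mon d h" for x x'
  proof -
    have "(+) x ` Mon d h' = (+) x' ` Mon d h' \<longleftrightarrow> x - x' \<in> Mon d h'"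
      by (rule coset_eq[OF Mon_subgrp])
    also have "\<dots> \<longleftrightarrow> (\<forall>k<d. \<forall>m<h' k. fls_nth (x k) m = fls_nth (x' k) m)"
      using x unfolding Mon_def vecs_def by auto
    also have "\<dots> \<longleftrightarrow> (\<forall>k<d. \<forall>m. h k \<le> m \<and> m < h' k \<longrightarrow> fls_nth (x k) m = fls_nth (x' k) m)"
    proof
      assume "\<forall>k<d. \<forall>m<h' k. fls_nth (x k) m = fls_nth (x' k) m"
      then show "\<forall>k<d. \<forall>m. h k \<le> m \<and> m < h' k \<longrightarrow> fls_nth (x k) m = fls_nth (x' k) m" by blast
    next
      assume a: "\<forall>k<d. \<forall>m. h k \<le> m \<and> m < h' k \<longrightarrow> fls_nth (x k) m = fls_nth (x' k) m"
      show "\<forall>k<d. \<forall>m<h' k. fls_nth (x k) m = fls_nth (x' k) m"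
      proof (intro allI impI)
        fix k m assume km: "k < d" "m < h' k"
        show "fls_nth (x k) m = fls_nth (x' k) m"
        proof (cases "m < h k")
          case True
          then show ?thesis using x km unfolding Mon_def by simp
        next
          case False
          then show ?thesis using a km by simp
        qed
      qed
    qed
    also have "\<dots> \<longleftrightarrow> tr x = tr x'"
    proof
      assume a: "\<forall>k<d. \<forall>m. h k \<le> m \<and> m < h' k \<longrightarrow> fls_nth (x k) m = fls_nth (x' k) m"
      show "tr x = tr x'"
      proof
        fix z show "tr x z = tr x' z"
          unfolding tr_def D_def using a by (cases z) simp
      qed
    next
      assume a: "tr x = tr x'"
      show "\<forall>k<d. \<forall>m. h k \<le> m \<and> m < h' k \<longrightarrow> fls_nth (x k) m = fls_nth (x' k) m"
      proof (intro allI impI)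
        fix k m assume km: "k < d" "h k \<le> m \<and> m < h' k"
        have "tr x (k, m) = tr x' (k, m)" using a by simp
        then show "fls_nth (x k) m = fls_nth (x' k) m" using km unfolding tr_def D_def by simp
      qed
    qed
    finally show ?thesis .
  qed
  have img: "tr ` Mon d h = PiE D (\<lambda>_. UNIV)"
  proof (intro set_eqI iffI)
    fix t assume "t \<in> tr ` Mon d h"
    then obtain x where "t = tr x" by blast
    then show "t \<in> PiE D (\<lambda>_. UNIV)" unfolding tr_def PiE_def extensional_def by simp
  next
    fix t assume t: "t \<in> PiE D (\<lambda>_. (UNIV :: 'a set))"
    define f where "f k = (\<lambda>m. if h k \<le> m \<and> m < h' k then t (k, m) else 0)" for k
    have ev: "\<exists>M. \<forall>n>M. f k (- int n) = 0" for k
      by (rule exI[of _ "nat (- h k)"]) (auto simp: f_def)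
    define x where "x k = (if k < d then Abs_fls (f k) else 0)" for k
    have nx: "k < d \<Longrightarrow> fls_nth (x k) m = f k m" for k m
      unfolding x_def using nth_Abs_fls_ex_nat_lower_bound[OF ev] by simp
    have "x \<in> Mon d h" unfolding Mon_def vecs_def using nx by (auto simp: x_def f_def)
    moreover have "tr x = t"
    proof
      fix z show "tr x z = t z"
      proof (cases "z \<in> D")
        case True
        then obtain k m where km: "z = (k, m)" "k < d" "h k \<le> m" "m < h' k" unfolding D_def by auto
        then show ?thesis unfolding tr_def using nx True by (simp add: f_def)
      next
        case False
        then show ?thesis using t unfolding tr_def PiE_def extensional_def by (cases z) simp
      qed
    qed
    ultimately show "t \<in> tr ` Mon d h" by blast
  qed
  have finD: "finite D" unfolding D_def by auto
  have cD: "card D = (\<Sum>k<d. nat (h' k - h k))" unfolding D_def by (subst card_SigmaI) auto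
  have rel2: "\<And>x x'. x \<in> Mon d h \<Longrightarrow> x' \<in> Mon d h \<Longrightarrow> ((+) x ` (Mon d h' :: (nat \<Rightarrow> 'a fls) set) = (+) x' ` (Mon d h' :: (nat \<Rightarrow> 'a fls) set)) = (tr x = tr x')"
    using rel by blast
  have "card ((\<lambda>x. (+) x ` (Mon d h' :: (nat \<Rightarrow> 'a fls) set)) ` Mon d h) = card (tr ` Mon d h) \<and>
     (finite ((\<lambda>x. (+) x ` (Mon d h' :: (nat \<Rightarrow> 'a fls) set)) ` Mon d h) \<longleftrightarrow> finite (tr ` Mon d h))"
    by (rule card_image_eqrel[where g="\<lambda>x. (+) x ` (Mon d h' :: (nat \<Rightarrow> 'a fls) set)" and f=tr and X="Mon d h", OF rel2])
  then have "card (cos (Mon d h) (Mon d h' :: (nat \<Rightarrow> 'a fls) set)) = card (tr ` Mon d h)"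
    unfolding cos_def by simp
  also have "\<dots> = card (UNIV :: 'a set) ^ card D" unfolding img using finD by (simp add: card_PiE)
  finally show ?thesis using cD by simp
qed

definition good :: "nat \<Rightarrow> (nat \<Rightarrow> 'a::{field,finite} fls) set \<Rightarrow> bool" where
  "good d Y \<longleftrightarrow> subgrp Y \<and> kcl Y \<and> (\<exists>N. std_lat d N \<subseteq> Y \<and> Y \<subseteq> std_lat d (- N))"

lemma std_mono: "N' \<le> N \<Longrightarrow> std_lat d N \<subseteq> std_lat d N'"
  unfolding std_Mon by (rule Mon_mono) simp

lemma lattice_good:
  assumes "is_lattice d (L :: (nat \<Rightarrow> 'a::{field,finite} fls) set)"
  shows "good d L"
proof -
  have m1: "(-1 :: 'a fls) \<in> intO" unfolding intO_def by simp
  have c: "fls_const c \<in> intO" for c :: 'a unfolding intO_def by simp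
  have "subgrp L" unfolding subgrp_def
  proof (intro conjI ballI)
    show "0 \<in> L" using assms unfolding is_lattice_def zero_fun_def by simp
  next
    fix x y assume "x \<in> L" "y \<in> L"
    then show "x + y \<in> L" using assms unfolding is_lattice_def vadd_plus by simp
  next
    fix x assume "x \<in> L"
    then have "(\<lambda>k. (-1) * x k) \<in> L" using assms m1 unfolding is_lattice_def by blast
    moreover have "(\<lambda>k. (-1) * x k) = - x" by (simp add: fun_eq_iff)
    ultimately show "- x \<in> L" by simp
  qed
  moreover have "kcl L" unfolding kcl_def sc_def using assms c unfolding is_lattice_def by blast
  ultimately show ?thesis using assms unfolding is_lattice_def good_def by blast
qed

lemma good_Int:
  assumes "good d X" "good d Y" shows "good d (X \<inter> Y)"
proof -
  obtain N1 N2 where N: "std_lat d N1 \<subseteq> X" "X \<subseteq> std_lat d (- N1)" "std_lat d N2 \<subseteq> Y" "Y \<subseteq> std_lat d (- N2)"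
    using assms unfolding good_def by blast
  have "std_lat d (max N1 N2) \<subseteq> X \<inter> Y" using N std_mono[of N1 "max N1 N2" d] std_mono[of N2 "max N1 N2" d] by auto
  moreover have "X \<inter> Y \<subseteq> std_lat d (- max N1 N2)" using N std_mono[of "- max N1 N2" "- N1" d] by auto
  moreover have "subgrp (X \<inter> Y)" using assms subgrp_Int unfolding good_def by blast
  moreover have "kcl (X \<inter> Y)" using assms unfolding good_def kcl_def by blast
  ultimately show ?thesis unfolding good_def by blast
qed

lemma good_sp:
  assumes "good d X" "good d Y" shows "good d (sp X Y)"
proof -
  obtain N1 N2 where N: "std_lat d N1 \<subseteq> X" "X \<subseteq> std_lat d (- N1)" "std_lat d N2 \<subseteq> Y" "Y \<subseteq> std_lat d (- N2)"
    using assms unfolding good_def by blast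
  have sX: "subgrp X" "subgrp Y" using assms unfolding good_def by auto
  have "std_lat d (max N1 N2) \<subseteq> sp X Y" using N std_mono[of N1 "max N1 N2" d] sp_sup1[OF sX(2), of X] by auto
  moreover have "sp X Y \<subseteq> std_lat d (- max N1 N2)"
  proof -
    have "X \<subseteq> std_lat d (- max N1 N2)" using N(2) std_mono[of "- max N1 N2" "- N1" d] by auto
    moreover have "Y \<subseteq> std_lat d (- max N1 N2)" using N(4) std_mono[of "- max N1 N2" "- N2" d] by auto
    ultimately show ?thesis unfolding std_Mon by (rule sp_sub[OF Mon_subgrp])
  qed
  moreover have "subgrp (sp X Y)" using subgrp_sp[OF sX] .
  moreover have "kcl (sp X Y)" unfolding kcl_def
  proof (intro allI ballI)
    fix c w assume "w \<in> sp X Y"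
    then obtain a b where ab: "a \<in> X" "b \<in> Y" "w = a + b" unfolding sp_def by auto
    have "sc c w = sc c a + sc c b" using ab sc_add2 by metis
    moreover have "sc c a \<in> X" "sc c b \<in> Y" using ab assms unfolding good_def kcl_def by auto
    ultimately show "sc c w \<in> sp X Y" unfolding sp_def by blast
  qed
  ultimately show ?thesis unfolding good_def by blast
qed

lemma good_fin:
  fixes X Y :: "(nat \<Rightarrow> 'a::{field,finite} fls) set"
  assumes "good d X" "good d Y" "Y \<subseteq> X"
  shows "finite (cos X Y)"
proof -
  obtain N1 N2 where N: "std_lat d N1 \<subseteq> X" "X \<subseteq> std_lat d (- N1)" "std_lat d N2 \<subseteq> Y" "Y \<subseteq> std_lat d (- N2)"
    using assms unfolding good_def by blast
  define N where "N = max (max N1 N2) 0"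
  have "std_lat d N \<subseteq> std_lat d N2" by (rule std_mono) (simp add: N_def)
  then have SY: "std_lat d N \<subseteq> Y" using N(3) by blast
  have "std_lat d (- N1) \<subseteq> std_lat d (- N)" by (rule std_mono) (simp add: N_def)
  then have XB: "X \<subseteq> std_lat d (- N)" using N(2) by blast
  have "card (cos (Mon d (\<lambda>_. - N)) (Mon d (\<lambda>_. N) :: (nat \<Rightarrow> 'a fls) set)) = card (UNIV :: 'a set) ^ (\<Sum>k<d. nat (N - - N))"
    by (rule Mon_card) (simp add: N_def)
  moreover have "card (UNIV :: 'a set) ^ (\<Sum>k<d. nat (N - - N)) > 0" using q_ge2[where 'a='a] by simp
  ultimately have "finite (cos (std_lat d (- N)) (std_lat d N :: (nat \<Rightarrow> 'a fls) set))"
    unfolding std_Mon by (metis card_ge_0_finite)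
  moreover have "cos X (std_lat d N) \<subseteq> cos (std_lat d (- N)) (std_lat d N)"
    unfolding cos_def using XB by auto
  ultimately have fin: "finite (cos X (std_lat d N))" by (rule finite_subset[rotated])
  have sX: "subgrp X" "subgrp Y" using assms unfolding good_def by auto
  show ?thesis using tower(2)[OF sX Mon_subgrp[of d "\<lambda>_. N"] SY[unfolded std_Mon] assms(3) fin[unfolded std_Mon]] .
qed

lemma good_card:
  fixes X Y :: "(nat \<Rightarrow> 'a::{field,finite} fls) set"
  assumes "good d X" "good d Y" "Y \<subseteq> X"
  shows "card (cos X Y) = card (UNIV :: 'a set) ^ qdim X Y"
proof -
  have f: "finite (cos X Y)" using good_fin[OF assms] .
  obtain a where a: "card (cos X Y) = card (UNIV :: 'a set) ^ a"
    using pow_q[of X Y] assms f unfolding good_def by blast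
  then show ?thesis using qdim_eq[OF a] by simp
qed

lemma qdim_tower:
  fixes X Y Z :: "(nat \<Rightarrow> 'a::{field,finite} fls) set"
  assumes "good d X" "good d Y" "good d Z" "Z \<subseteq> Y" "Y \<subseteq> X"
  shows "qdim X Z = qdim X Y + qdim Y Z"
proof -
  have s: "subgrp X" "subgrp Y" "subgrp Z" using assms unfolding good_def by auto
  have "card (cos X Z) = card (cos X Y) * card (cos Y Z)"
    using tower(1)[OF s assms(4,5) good_fin[OF assms(1,3)]] using assms(4,5) by blast
  then have "card (UNIV :: 'a set) ^ qdim X Z = card (UNIV :: 'a set) ^ (qdim X Y + qdim Y Z)"
    using good_card[OF assms(1,3)] good_card[OF assms(1,2)] good_card[OF assms(2,3)] assms(4,5)
    by (simp add: power_add)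
  then show ?thesis using q_ge2[where 'a='a] by (simp add: power_inject_exp)
qed

lemma qdim_iso2:
  fixes A B :: "(nat \<Rightarrow> 'a::{field,finite} fls) set"
  assumes "good d A" "good d B"
  shows "qdim (sp A B) B = qdim A (A \<inter> B)"
proof -
  have s: "subgrp A" "subgrp B" using assms unfolding good_def by auto
  have "card (cos (sp A B) B) = card (cos A (A \<inter> B))" using iso2[OF s] by simp
  then have "card (UNIV :: 'a set) ^ qdim (sp A B) B = card (UNIV :: 'a set) ^ qdim A (A \<inter> B)"
    using good_card[OF good_sp[OF assms] assms(2) sp_sup2[OF s(1)]] good_card[OF assms(1) good_Int[OF assms]]
    by simp
  then show ?thesis using q_ge2[where 'a='a] by (simp add: power_inject_exp)
qed

lemma qdim_self:
  fixes X :: "(nat \<Rightarrow> 'a::{field,finite} fls) set"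
  assumes "subgrp X" shows "qdim X X = 0"
  by (rule qdim_eq) (simp add: cos_self[OF assms])

definition Tm :: "(nat \<Rightarrow> 'a::field fls) \<Rightarrow> nat \<Rightarrow> 'a fls" where
  "Tm x = (\<lambda>k. fls_X_inv * x k)"

lemma chain_per: "lchain n d L \<Longrightarrow> L (i + int n) = Tm ` L i"
  unfolding lchain_def Tm_def by simp

lemma chain_lat: "lchain n d L \<Longrightarrow> is_lattice d (L i)"
  unfolding lchain_def by simp

lemma chain_good: "lchain n d (L :: int \<Rightarrow> (nat \<Rightarrow> 'a::{field,finite} fls) set) \<Longrightarrow> good d (L i)"
  by (rule lattice_good[OF chain_lat])

lemma chain_step: "lchain n d L \<Longrightarrow> L (i - 1) \<subseteq> L i"
  unfolding lchain_def by simp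

lemma chain_mono:
  assumes "lchain n d L" "a \<le> b" shows "L a \<subseteq> L b"
proof -
  have "\<forall>k::nat. L a \<subseteq> L (a + int k)"
  proof
    fix k :: nat show "L a \<subseteq> L (a + int k)"
    proof (induction k)
      case 0 then show ?case by simp
    next
      case (Suc k)
      have "L (a + int (Suc k) - 1) \<subseteq> L (a + int (Suc k))" by (rule chain_step[OF assms(1)])
      then show ?case using Suc by simp
    qed
  qed
  moreover have "b = a + int (nat (b - a))" using assms(2) by simp
  ultimately show ?thesis by metis
qed

lemma chain_iter:
  assumes "lchain n d L" shows "L (i + int p * int n) = (Tm ^^ p) ` L i"
proof (induction p)
  case 0 then show ?case by simp
next
  case (Suc p)
  have "L (i + int (Suc p) * int n) = L ((i + int p * int n) + int n)" by (simp add: algebra_simps)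
  also have "\<dots> = Tm ` L (i + int p * int n)" by (rule chain_per[OF assms])
  also have "\<dots> = (Tm ^^ Suc p) ` L i" using Suc by (simp add: image_comp)
  finally show ?case .
qed

lemma Tm_std: "(Tm ^^ p) ` (std_lat d N :: (nat \<Rightarrow> 'a::field fls) set) = std_lat d (N - int p)"
proof (induction p)
  case 0 then show ?case by simp
next
  case (Suc p)
  have "(Tm ^^ Suc p) ` (std_lat d N :: (nat \<Rightarrow> 'a fls) set) = Tm ` ((Tm ^^ p) ` std_lat d N)" by (simp add: image_comp)
  also have "\<dots> = Tm ` (std_lat d (N - int p) :: (nat \<Rightarrow> 'a fls) set)" using Suc by simp
  also have "\<dots> = std_lat d (N - int p - 1)" unfolding std_Mon Tm_def[abs_def] by (rule Mon_T)
  finally show ?case by (simp add: algebra_simps)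
qed

lemma inj_Tm: "inj (Tm :: (nat \<Rightarrow> 'a::field fls) \<Rightarrow> _)"
proof (rule injI)
  fix x y :: "nat \<Rightarrow> 'a fls" assume "Tm x = Tm y"
  then have "\<And>k. fls_X_inv * x k = fls_X_inv * y k" unfolding Tm_def by (simp add: fun_eq_iff)
  then show "x = y" by (simp add: fun_eq_iff)
qed

lemma shift_ex:
  fixes L L' :: "int \<Rightarrow> (nat \<Rightarrow> 'a::{field,finite} fls) set"
  assumes "lchain n d L" "lchain n d L'"
  shows "\<exists>p::nat. L (i - int p * int n) \<subseteq> L' i \<and> L i \<subseteq> L' (i + int p * int n)"
proof -
  obtain N1 where N1: "L i \<subseteq> std_lat d (- N1)" using chain_lat[OF assms(1)] unfolding is_lattice_def by blast
  obtain N2 where N2: "std_lat d N2 \<subseteq> L' i" using chain_lat[OF assms(2)] unfolding is_lattice_def by blast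
  define p where "p = nat (N1 + N2)"
  have "std_lat d (N2 - int p) \<subseteq> L' (i + int p * int n)"
    unfolding chain_iter[OF assms(2)] Tm_std[symmetric] using N2 by (rule image_mono)
  moreover have "std_lat d (- N1) \<subseteq> std_lat d (N2 - int p)" by (rule std_mono) (simp add: p_def)
  ultimately have b: "L i \<subseteq> L' (i + int p * int n)" using N1 by blast
  have "L i = (Tm ^^ p) ` L (i - int p * int n)" using chain_iter[OF assms(1), of "i - int p * int n" p] by simp
  then have "(Tm ^^ p) ` L (i - int p * int n) \<subseteq> (Tm ^^ p) ` L' i" using b chain_iter[OF assms(2), of i p] by simp
  moreover have "inj ((Tm :: (nat \<Rightarrow> 'a fls) \<Rightarrow> _) ^^ p)" using inj_fn[OF inj_Tm] by blast
  ultimately have "L (i - int p * int n) \<subseteq> L' i" using inj_image_subset_iff by blast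
  then show ?thesis using b by blast
qed

lemma relpos_sp: "relpos L L' r s = qdim (L r \<inter> L' s) (sp (L (r - 1) \<inter> L' s) (L r \<inter> L' (s - 1)))"
  unfolding relpos_def msum_sp ..

lemma sp_eq_right: "subgrp X \<Longrightarrow> subgrp U \<Longrightarrow> U \<subseteq> X \<Longrightarrow> sp U X = X"
  by (simp add: sp_sub sp_sup2 subset_antisym)

lemma zero_a:
  fixes L L' :: "int \<Rightarrow> (nat \<Rightarrow> 'a::{field,finite} fls) set"
  assumes "lchain n d L" "lchain n d L'" "L r \<inter> L' s \<subseteq> L' (s - 1)"
  shows "relpos L L' r s = 0"
proof -
  have g: "\<And>i. good d (L i)" "\<And>i. good d (L' i)" using chain_good assms by blast+
  have sg: "subgrp (L r \<inter> L' s)" "subgrp (L (r - 1) \<inter> L' s)"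
    using g good_Int unfolding good_def by blast+
  have e: "L r \<inter> L' (s - 1) = L r \<inter> L' s" using assms(3) chain_step[OF assms(2), of s] by blast
  have "L (r - 1) \<inter> L' s \<subseteq> L r \<inter> L' s" using chain_step[OF assms(1), of r] by blast
  then have "sp (L (r - 1) \<inter> L' s) (L r \<inter> L' (s - 1)) = L r \<inter> L' s" unfolding e
    by (rule sp_eq_right[OF sg(1) sg(2)])
  then show ?thesis unfolding relpos_sp using qdim_self[OF sg(1)] by simp
qed

lemma telescope:
  fixes M :: "int \<Rightarrow> (nat \<Rightarrow> 'a::{field,finite} fls) set"
  assumes "\<And>t. good d (M t)" "\<And>t. M (t - 1) \<subseteq> M t"
  shows "qdim (M (a + int k)) (M a) = (\<Sum>t\<in>{a<..a + int k}. qdim (M t) (M (t - 1))) \<and> M a \<subseteq> M (a + int k)"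
proof (induction k)
  case 0
  have "subgrp (M a)" using assms(1) unfolding good_def by blast
  then show ?case using qdim_self by simp
next
  case (Suc k)
  have e: "a + int (Suc k) = (a + int k) + 1" by simp
  have s1: "M (a + int k) \<subseteq> M (a + int (Suc k))" using assms(2)[of "a + int (Suc k)"] by simp
  have "qdim (M (a + int (Suc k))) (M a) = qdim (M (a + int (Suc k))) (M (a + int k)) + qdim (M (a + int k)) (M a)"
    by (rule qdim_tower[OF assms(1) assms(1) assms(1)]) (use Suc s1 in auto)
  moreover have "{a<..a + int (Suc k)} = insert (a + int (Suc k)) {a<..a + int k}" by auto
  moreover have "M a \<subseteq> M (a + int (Suc k))" using Suc s1 by blast
  ultimately show ?case using Suc s1 by simp
qed

lemma telescope2:
  fixes M :: "int \<Rightarrow> (nat \<Rightarrow> 'a::{field,finite} fls) set"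
  assumes "\<And>t. good d (M t)" "\<And>t. M (t - 1) \<subseteq> M t" "a \<le> b"
  shows "qdim (M b) (M a) = (\<Sum>t\<in>{a<..b}. qdim (M t) (M (t - 1)))"
  using telescope[where M=M and d=d, OF assms(1,2), of a "nat (b - a)"] assms(3) by simp

lemma piece:
  fixes L L' :: "int \<Rightarrow> (nat \<Rightarrow> 'a::{field,finite} fls) set" and s :: int
  assumes "lchain n d L" "lchain n d L'" "t \<le> i"
  defines "M \<equiv> \<lambda>t. sp (L t \<inter> L' s) (L i \<inter> L' (s - 1))"
  shows "qdim (M t) (M (t - 1)) = relpos L L' t s"
proof -
  have g: "\<And>i. good d (L i)" "\<And>i. good d (L' i)" using chain_good assms by blast+
  define A where "A = L t \<inter> L' s"
  define U where "U = L (t - 1) \<inter> L' s"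
  define W where "W = L i \<inter> L' (s - 1)"
  have gA: "good d A" "good d U" "good d W" unfolding A_def U_def W_def using g good_Int by blast+
  have sA: "subgrp A" "subgrp U" "subgrp W" using gA unfolding good_def by blast+
  have UA: "U \<subseteq> A" unfolding U_def A_def using chain_step[OF assms(1), of t] by blast
  have Mt: "M t = sp A (M (t - 1))"
  proof -
    have "sp A (sp U W) = sp A W"
    proof (intro set_eqI iffI)
      fix z assume "z \<in> sp A (sp U W)"
      then obtain a u w where "a \<in> A" "u \<in> U" "w \<in> W" "z = a + (u + w)" unfolding sp_def by blast
      moreover have "a + u \<in> A" using calculation UA subgrp_add[OF sA(1)] by blast
      moreover have "z = (a + u) + w" using calculation by (simp add: add.assoc)
      ultimately show "z \<in> sp A W" unfolding sp_def by blast
    next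
      fix z assume "z \<in> sp A W"
      then obtain a w where "a \<in> A" "w \<in> W" "z = a + w" unfolding sp_def by blast
      moreover have "w \<in> sp U W" using calculation sp_sup2[OF sA(2)] by blast
      ultimately show "z \<in> sp A (sp U W)" unfolding sp_def by blast
    qed
    then show ?thesis unfolding M_def A_def U_def W_def by simp
  qed
  have gM: "good d (M (t - 1))" unfolding M_def using g good_Int good_sp by blast
  have "qdim (M t) (M (t - 1)) = qdim A (A \<inter> M (t - 1))"
    unfolding Mt by (rule qdim_iso2[OF gA(1) gM])
  also have "A \<inter> M (t - 1) = sp U (A \<inter> W)"
    unfolding M_def U_def[symmetric] W_def[symmetric] by (rule modular[OF sA(1) sA(2) sA(3) UA])
  also have "A \<inter> W = L t \<inter> L' (s - 1)"
    unfolding A_def W_def using chain_mono[OF assms(1) assms(3)] chain_step[OF assms(2), of s] by blast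
  finally show ?thesis unfolding relpos_sp A_def U_def by simp
qed

lemma inner:
  fixes L L' :: "int \<Rightarrow> (nat \<Rightarrow> 'a::{field,finite} fls) set"
  assumes "lchain n d L" "lchain n d L'" "R0 \<le> i" "L R0 \<subseteq> L' i" "i < s"
  shows "qdim (L i \<inter> L' s) (L i \<inter> L' (s - 1)) = (\<Sum>t\<in>{R0<..i}. relpos L L' t s)"
proof -
  have g: "\<And>i. good d (L i)" "\<And>i. good d (L' i)" using chain_good assms by blast+
  define M where "M = (\<lambda>t. sp (L t \<inter> L' s) (L i \<inter> L' (s - 1)))"
  have gM: "\<And>t. good d (M t)" unfolding M_def using g good_Int good_sp by blast
  have sM: "\<And>t. M (t - 1) \<subseteq> M t"
  proof -
    fix t
    have "L (t - 1) \<inter> L' s \<subseteq> L t \<inter> L' s" using chain_step[OF assms(1), of t] by blast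
    then show "M (t - 1) \<subseteq> M t" unfolding M_def sp_def by blast
  qed
  have sW: "subgrp (L i \<inter> L' (s - 1))" "subgrp (L i \<inter> L' s)" "subgrp (L R0 \<inter> L' s)"
    using g good_Int unfolding good_def by blast+
  have "L i \<inter> L' (s - 1) \<subseteq> L i \<inter> L' s" using chain_step[OF assms(2), of s] by blast
  then have Mi: "M i = L i \<inter> L' s" unfolding M_def by (rule sp_id[OF sW(2) sW(1)])
  have "L' i \<subseteq> L' (s - 1)" using chain_mono[OF assms(2)] assms(5) by simp
  then have "L R0 \<inter> L' s \<subseteq> L i \<inter> L' (s - 1)" using assms(4) chain_mono[OF assms(1) assms(3)] by blast
  then have MR: "M R0 = L i \<inter> L' (s - 1)" unfolding M_def by (rule sp_eq_right[OF sW(1) sW(3)])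
  have "qdim (M i) (M R0) = (\<Sum>t\<in>{R0<..i}. qdim (M t) (M (t - 1)))"
    by (rule telescope2[where M=M and d=d, OF gM sM assms(3)])
  also have "\<dots> = (\<Sum>t\<in>{R0<..i}. relpos L L' t s)"
  proof (rule sum.cong[OF refl])
    fix t assume "t \<in> {R0<..i}"
    then have "t \<le> i" by simp
    from piece[OF assms(1,2) this, of s] show "qdim (M t) (M (t - 1)) = relpos L L' t s" unfolding M_def .
  qed
  finally show ?thesis using Mi MR by simp
qed

lemma outer:
  fixes L L' :: "int \<Rightarrow> (nat \<Rightarrow> 'a::{field,finite} fls) set"
  assumes "lchain n d L" "lchain n d L'" "R0 \<le> i" "L R0 \<subseteq> L' i" "i \<le> S0" "L i \<subseteq> L' S0"
  shows "qdim (L i) (L i \<inter> L' i) = (\<Sum>s\<in>{i<..S0}. \<Sum>t\<in>{R0<..i}. relpos L L' t s)"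
proof -
  have g: "\<And>i. good d (L i)" "\<And>i. good d (L' i)" using chain_good assms by blast+
  define M where "M = (\<lambda>s. L i \<inter> L' s)"
  have gM: "\<And>t. good d (M t)" unfolding M_def using g good_Int by blast
  have sM: "\<And>t. M (t - 1) \<subseteq> M t" unfolding M_def using chain_step[OF assms(2)] by blast
  have "qdim (M S0) (M i) = (\<Sum>s\<in>{i<..S0}. qdim (M s) (M (s - 1)))"
    by (rule telescope2[where M=M and d=d, OF gM sM assms(5)])
  also have "\<dots> = (\<Sum>s\<in>{i<..S0}. \<Sum>t\<in>{R0<..i}. relpos L L' t s)"
  proof (rule sum.cong[OF refl])
    fix s assume "s \<in> {i<..S0}"
    then have "i < s" by simp
    from inner[OF assms(1-4) this] show "qdim (M s) (M (s - 1)) = (\<Sum>t\<in>{R0<..i}. relpos L L' t s)" unfolding M_def .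
  qed
  finally show ?thesis using assms(6) unfolding M_def by (simp add: Int_absorb2)
qed

lemma eps1:
  fixes L L' :: "int \<Rightarrow> (nat \<Rightarrow> 'a::{field,finite} fls) set"
  assumes "lchain n d L" "lchain n d L'"
  shows "(\<Sum>(r, s)\<in>{(r, s). r \<le> i \<and> i < s \<and> relpos L L' r s \<noteq> 0}. int (relpos L L' r s))
         = int (qdim (L i) (L i \<inter> L' i))"
proof -
  obtain p :: nat where p: "L (i - int p * int n) \<subseteq> L' i" "L i \<subseteq> L' (i + int p * int n)"
    using shift_ex[OF assms] by blast
  define R0 where "R0 = i - int p * int n"
  define S0 where "S0 = i + int p * int n"
  have R0i: "R0 \<le> i" and iS0: "i \<le> S0" unfolding R0_def S0_def by auto
  have pR: "L R0 \<subseteq> L' i" and pS: "L i \<subseteq> L' S0" using p unfolding R0_def S0_def by auto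
  define E where "E = {(r, s). r \<le> i \<and> i < s \<and> relpos L L' r s \<noteq> 0}"
  define box where "box = {R0<..i} \<times> {i<..S0}"
  have sub: "E \<subseteq> box"
  proof
    fix x assume "x \<in> E"
    then obtain r s where x: "x = (r, s)" "r \<le> i" "i < s" "relpos L L' r s \<noteq> 0" unfolding E_def by auto
    have "R0 < r"
    proof (rule ccontr)
      assume "\<not> R0 < r"
      then have "r \<le> R0" by simp
      then have "L r \<subseteq> L R0" by (rule chain_mono[OF assms(1)])
      moreover have "i \<le> s - 1" using x(3) by simp
      then have "L' i \<subseteq> L' (s - 1)" by (rule chain_mono[OF assms(2)])
      ultimately have "L r \<inter> L' s \<subseteq> L' (s - 1)" using pR by blast
      then show False using zero_a[OF assms, of r s] x(4) by simp
    qed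
    moreover have "s \<le> S0"
    proof (rule ccontr)
      assume "\<not> s \<le> S0"
      then have "S0 \<le> s - 1" by simp
      then have "L' S0 \<subseteq> L' (s - 1)" by (rule chain_mono[OF assms(2)])
      moreover have "L r \<subseteq> L i" using x(2) by (rule chain_mono[OF assms(1)])
      ultimately have "L r \<inter> L' s \<subseteq> L' (s - 1)" using pS by blast
      then show False using zero_a[OF assms, of r s] x(4) by simp
    qed
    ultimately show "x \<in> box" unfolding box_def using x by auto
  qed
  have finbox: "finite box" unfolding box_def by simp
  have zero: "\<forall>x\<in>box - E. (\<lambda>(r, s). int (relpos L L' r s)) x = 0"
  proof
    fix x assume x: "x \<in> box - E"
    then obtain r s where rs: "x = (r, s)" "r \<le> i" "i < s" unfolding box_def by auto
    then have "relpos L L' r s = 0" using x unfolding E_def by simp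
    then show "(\<lambda>(r, s). int (relpos L L' r s)) x = 0" using rs by simp
  qed
  have "(\<Sum>(r, s)\<in>E. int (relpos L L' r s)) = (\<Sum>(r, s)\<in>box. int (relpos L L' r s))"
    by (rule sum.mono_neutral_left[OF finbox sub zero])
  also have "\<dots> = (\<Sum>r\<in>{R0<..i}. \<Sum>s\<in>{i<..S0}. int (relpos L L' r s))"
    unfolding box_def by (rule sum.cartesian_product[symmetric])
  also have "\<dots> = (\<Sum>s\<in>{i<..S0}. \<Sum>r\<in>{R0<..i}. int (relpos L L' r s))"
    by (rule sum.swap)
  also have "\<dots> = int (\<Sum>s\<in>{i<..S0}. \<Sum>r\<in>{R0<..i}. relpos L L' r s)"
    by (simp only: of_nat_sum)
  also have "\<dots> = int (qdim (L i) (L i \<inter> L' i))"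
    using outer[OF assms R0i pR iS0 pS] by simp
  finally show ?thesis unfolding E_def .
qed

lemma sp_comm: "sp A B = sp B A"
proof -
  have "\<And>A B. sp A B \<subseteq> sp B A"
  proof
    fix A B z assume "z \<in> sp A B"
    then obtain a b where "a \<in> A" "b \<in> B" "z = a + b" unfolding sp_def by blast
    moreover have "z = b + a" using calculation by (simp add: add.commute)
    ultimately show "z \<in> sp B A" unfolding sp_def by blast
  qed
  from this[of A B] this[of B A] show ?thesis by (rule subset_antisym)
qed

lemma relpos_swap: "relpos L' L s r = relpos L L' r s"
  unfolding relpos_sp by (simp add: Int_commute sp_comm)

lemma eps_formula:
  fixes L L' :: "int \<Rightarrow> (nat \<Rightarrow> 'a::{field,finite} fls) set"
  assumes "lchain n d L" "lchain n d L'"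
  shows "eps (relpos L L') i = int (qdim (L i) (L i \<inter> L' i)) - int (qdim (L' i) (L' i \<inter> L i))"
proof -
  define E2 where "E2 = {(r, s). r \<le> i \<and> i < s \<and> relpos L' L r s \<noteq> 0}"
  have e: "{(r, s). i < r \<and> s \<le> i \<and> relpos L L' r s \<noteq> 0} = prod.swap ` E2"
  proof (intro set_eqI iffI)
    fix x assume "x \<in> {(r, s). i < r \<and> s \<le> i \<and> relpos L L' r s \<noteq> 0}"
    then obtain r s where "x = (r, s)" "i < r" "s \<le> i" "relpos L L' r s \<noteq> 0" by auto
    moreover have "(s, r) \<in> E2" using calculation relpos_swap[of L' L s r] unfolding E2_def by auto
    ultimately show "x \<in> prod.swap ` E2" by force
  next
    fix x assume "x \<in> prod.swap ` E2"
    then obtain r s where "x = (s, r)" "r \<le> i" "i < s" "relpos L' L r s \<noteq> 0" unfolding E2_def by auto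
    then show "x \<in> {(r, s). i < r \<and> s \<le> i \<and> relpos L L' r s \<noteq> 0}" using relpos_swap[of L' L r s] by auto
  qed
  have inj: "inj_on prod.swap E2" by (rule inj_onI) auto
  have "(\<Sum>(r, s)\<in>{(r, s). i < r \<and> s \<le> i \<and> relpos L L' r s \<noteq> 0}. int (relpos L L' r s))
      = (\<Sum>x\<in>E2. (\<lambda>(r, s). int (relpos L L' r s)) (prod.swap x))"
    unfolding e by (rule sum.reindex[OF inj, unfolded comp_def])
  also have "\<dots> = (\<Sum>(r, s)\<in>E2. int (relpos L' L r s))"
    by (rule sum.cong[OF refl]) (auto simp: relpos_swap)
  also have "\<dots> = int (qdim (L' i) (L' i \<inter> L i))"
    unfolding E2_def by (rule eps1[OF assms(2) assms(1)])
  finally have 2: "(\<Sum>(r, s)\<in>{(r, s). i < r \<and> s \<le> i \<and> relpos L L' r s \<noteq> 0}. int (relpos L L' r s))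
      = int (qdim (L' i) (L' i \<inter> L i))" .
  show ?thesis unfolding eps_def 2 eps1[OF assms] ..
qed

lemma rel_q:
  fixes X Z S :: "(nat \<Rightarrow> 'a::{field,finite} fls) set"
  assumes "good d X" "good d Z" "good d S" "S \<subseteq> X" "S \<subseteq> Z"
  shows "int (qdim X (X \<inter> Z)) = int (qdim X S) - int (qdim (X \<inter> Z) S)"
proof -
  have "qdim X S = qdim X (X \<inter> Z) + qdim (X \<inter> Z) S"
    by (rule qdim_tower[OF assms(1) good_Int[OF assms(1,2)] assms(3)]) (use assms in auto)
  then show ?thesis by simp
qed

lemma eps_add:
  fixes L L'' L' :: "int \<Rightarrow> (nat \<Rightarrow> 'a::{field,finite} fls) set"
  assumes "lchain n d L" "lchain n d L''" "lchain n d L'"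
  shows "eps (relpos L L') i = eps (relpos L'' L') i + eps (relpos L L'') i"
proof -
  have g: "good d (L i)" "good d (L'' i)" "good d (L' i)" using chain_good assms by blast+
  obtain N1 N2 N3 where N: "std_lat d N1 \<subseteq> L i" "std_lat d N2 \<subseteq> L'' i" "std_lat d N3 \<subseteq> L' i"
    using g unfolding good_def by blast
  define N where "N = max N1 (max N2 N3)"
  define S where "S = (std_lat d N :: (nat \<Rightarrow> 'a fls) set)"
  have "S \<subseteq> std_lat d N1" "S \<subseteq> std_lat d N2" "S \<subseteq> std_lat d N3"
    unfolding S_def by (rule std_mono, simp add: N_def)+
  then have S: "S \<subseteq> L i" "S \<subseteq> L'' i" "S \<subseteq> L' i" using N by blast+
  have gS: "good d S" unfolding S_def std_Mon by (rule lattice_good[OF Mon_lattice])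
  have a: "eps (relpos L L') i = int (qdim (L i) S) - int (qdim (L' i) S)"
    unfolding eps_formula[OF assms(1,3)] rel_q[OF g(1) g(3) gS S(1) S(3)] rel_q[OF g(3) g(1) gS S(3) S(1)]
    by (simp add: Int_commute)
  have b: "eps (relpos L'' L') i = int (qdim (L'' i) S) - int (qdim (L' i) S)"
    unfolding eps_formula[OF assms(2,3)] rel_q[OF g(2) g(3) gS S(2) S(3)] rel_q[OF g(3) g(2) gS S(3) S(2)]
    by (simp add: Int_commute)
  have c: "eps (relpos L L'') i = int (qdim (L i) S) - int (qdim (L'' i) S)"
    unfolding eps_formula[OF assms(1,2)] rel_q[OF g(1) g(2) gS S(1) S(2)] rel_q[OF g(2) g(1) gS S(2) S(1)]
    by (simp add: Int_commute)
  show ?thesis using a b c by simp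
qed

lemma pred_div:
  fixes a n :: int
  assumes n: "0 < n"
  shows "(a - 1) div n = a div n - (if n dvd a then 1 else 0)"
proof -
  have a: "a = a mod n + (a div n) * n" by simp
  show ?thesis
  proof (cases "n dvd a")
    case True
    then have "a mod n = 0" by simp
    then have e: "a - 1 = (n - 1) + (a div n - 1) * n" using a by (simp add: algebra_simps)
    have "((n - 1) + (a div n - 1) * n) div n = (a div n - 1) + (n - 1) div n"
      by (rule div_mult_self1) (use n in simp)
    moreover have "(n - 1) div n = 0" using n by (simp add: div_pos_pos_trivial)
    moreover have "(a - 1) div n = ((n - 1) + (a div n - 1) * n) div n" using e by (rule arg_cong)
    ultimately show ?thesis using True by simp
  next
    case False
    then have m: "0 < a mod n" "a mod n < n" using n
      by (simp_all add: dvd_eq_mod_eq_0 order_le_neq_trans)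
    have e: "a - 1 = (a mod n - 1) + (a div n) * n" using a by (simp add: algebra_simps)
    have "((a mod n - 1) + (a div n) * n) div n = a div n + (a mod n - 1) div n"
      by (rule div_mult_self1) (use n in simp)
    moreover have "(a mod n - 1) div n = 0" using m by (simp add: div_pos_pos_trivial)
    moreover have "(a - 1) div n = ((a mod n - 1) + (a div n) * n) div n" using e by (rule arg_cong)
    ultimately show ?thesis using False by simp
  qed
qed

lemma cnt:
  fixes a b n :: int
  assumes n: "0 < n"
  shows "nat (min (max (- ((a - 1) div n)) (- (b div n))) (max (- (a div n)) (- ((b - 1) div n)))
           - max (- (a div n)) (- (b div n))) = (if a = b \<and> n dvd a then 1 else 0)"
proof -
  define u where "u = a div n"
  define v where "v = b div n"
  have pa: "(a - 1) div n = u - (if n dvd a then 1 else 0)" unfolding u_def by (rule pred_div[OF n])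
  have pb: "(b - 1) div n = v - (if n dvd b then 1 else 0)" unfolding v_def by (rule pred_div[OF n])
  show ?thesis
  proof (cases "n dvd a \<and> n dvd b")
    case True
    then have au: "a = u * n" "b = v * n" unfolding u_def v_def by simp_all
    have "a = b \<longleftrightarrow> u = v" using au n by simp
    then show ?thesis unfolding pa pb u_def[symmetric] v_def[symmetric] using True
      by (cases "u = v") (auto simp: min_def max_def)
  next
    case False
    then have "\<not> (a = b \<and> n dvd a)" by auto
    then show ?thesis unfolding pa pb u_def[symmetric] v_def[symmetric] using False
      by (auto simp: min_def max_def)
  qed
qed

lemma mon_chain:
  fixes F :: "nat \<Rightarrow> int \<Rightarrow> int"
  assumes "\<And>k i. F k i \<le> F k (i - 1)" "\<And>k i. F k (i + int n) = F k i - 1"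
  shows "lchain n d (\<lambda>i. (Mon d (\<lambda>k. F k i) :: (nat \<Rightarrow> 'a::field fls) set))"
  unfolding lchain_def
proof (intro conjI allI)
  fix i
  show "is_lattice d (Mon d (\<lambda>k. F k i) :: (nat \<Rightarrow> 'a fls) set)" by (rule Mon_lattice)
  show "(Mon d (\<lambda>k. F k (i - 1)) :: (nat \<Rightarrow> 'a fls) set) \<subseteq> Mon d (\<lambda>k. F k i)"
    by (rule Mon_mono) (rule assms(1))
  have "(Mon d (\<lambda>k. F k (i + int n)) :: (nat \<Rightarrow> 'a fls) set) = Mon d (\<lambda>k. F k i - 1)"
    using assms(2) by simp
  also have "\<dots> = (\<lambda>x k. fls_X_inv * x k) ` Mon d (\<lambda>k. F k i)" by (rule Mon_T[symmetric])
  finally show "(Mon d (\<lambda>k. F k (i + int n)) :: (nat \<Rightarrow> 'a fls) set) = (\<lambda>x k. fls_X_inv * x k) ` Mon d (\<lambda>k. F k i)" .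
qed

lemma size_sum_mset: "finite S \<Longrightarrow> size (\<Sum>z\<in>S. f z :: 'b multiset) = (\<Sum>z\<in>S. size (f z))"
  by (induction S rule: finite_induct) auto

lemma Xi_per:
  assumes "Xi n d C"
  shows "C (a + c * int n) (b + c * int n) = C a b"
proof -
  have per: "\<And>i j. C (i + int n) (j + int n) = C i j" using assms unfolding Xi_def by blast
  have nat: "\<And>a b. C (a + int p * int n) (b + int p * int n) = C a b" for p :: nat
  proof (induction p)
    case 0 then show ?case by simp
  next
    case (Suc p)
    have "C (a + int (Suc p) * int n) (b + int (Suc p) * int n) = C ((a + int p * int n) + int n) ((b + int p * int n) + int n)"
      by (simp add: algebra_simps)
    also have "\<dots> = C a b" using per Suc by simp
    finally show ?case .
  qed
  show ?thesis
  proof (cases "0 \<le> c")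
    case True
    then show ?thesis using nat[of a "nat c" b] by simp
  next
    case False
    have "C ((a + c * int n) + int (nat (- c)) * int n) ((b + c * int n) + int (nat (- c)) * int n) = C (a + c * int n) (b + c * int n)"
      by (rule nat)
    then show ?thesis using False by (simp add: algebra_simps)
  qed
qed

lemma realize:
  fixes C :: "int \<Rightarrow> int \<Rightarrow> nat"
  assumes n1: "n \<ge> 1" and XiC: "Xi n d C"
  shows "\<exists>P :: (int \<Rightarrow> (nat \<Rightarrow> 'a::{field,finite} fls) set) \<times> (int \<Rightarrow> (nat \<Rightarrow> 'a fls) set).
           lchain n d (fst P) \<and> lchain n d (snd P) \<and> relpos (fst P) (snd P) = C"
proof -
  define ni where "ni = int n"
  have ni: "0 < ni" using n1 unfolding ni_def by simp
  define supp where "supp = {(i, j). 1 \<le> i \<and> i \<le> int n \<and> C i j \<noteq> 0}"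
  have fins: "finite supp" and sums: "(\<Sum>(i, j)\<in>supp. C i j) = d" using XiC unfolding Xi_def supp_def by auto
  define M where "M = (\<Sum>z\<in>supp. replicate_mset (C (fst z) (snd z)) z)"
  have cM: "count M z = (if z \<in> supp then C (fst z) (snd z) else 0)" for z
    unfolding M_def count_sum using fins by (simp add: sum.delta)
  have sM: "size M = d"
  proof -
    have "size M = (\<Sum>z\<in>supp. C (fst z) (snd z))" unfolding M_def using fins by (simp add: size_sum_mset)
    also have "\<dots> = d" using sums by (simp add: case_prod_beta)
    finally show ?thesis .
  qed
  obtain xs where xs: "mset xs = M" using ex_mset by blast
  have lxs: "length xs = d" using xs sM by (metis size_mset)
  have card_xs: "card {k. k < d \<and> xs ! k = z} = count M z" for z
  proof -
    have "count M z = count_list xs z" unfolding xs[symmetric] by (rule count_mset)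
    also have "\<dots> = length (filter ((=) z) xs)" by (rule count_list_eq_length_filter)
    also have "\<dots> = card {k. k < length xs \<and> z = xs ! k}" by (rule length_filter_conv_card)
    moreover have "{k. k < length xs \<and> z = xs ! k} = {k. k < d \<and> xs ! k = z}" using lxs by auto
    ultimately show ?thesis by simp
  qed
  have insupp: "k < d \<Longrightarrow> xs ! k \<in> supp" for k
  proof -
    assume "k < d"
    then have "xs ! k \<in> set xs" using lxs by simp
    then have "count M (xs ! k) > 0" unfolding xs[symmetric] by (rule count_mset_gt_0)
    then show "xs ! k \<in> supp" using cM[of "xs ! k"] by (cases "xs ! k \<in> supp") auto
  qed
  define \<rho> where "\<rho> k = fst (xs ! k)" for k
  define \<sigma> where "\<sigma> k = snd (xs ! k)" for k
  have \<rho>b: "k < d \<Longrightarrow> 1 \<le> \<rho> k \<and> \<rho> k \<le> ni" for k using insupp[of k] unfolding supp_def \<rho>_def ni_def by auto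
  define f where "f k i = - ((i - \<rho> k) div ni)" for k i
  define g where "g k j = - ((j - \<sigma> k) div ni)" for k j
  have f1: "f k i \<le> f k (i - 1)" for k i unfolding f_def using zdiv_mono1[of "i - 1 - \<rho> k" "i - \<rho> k" ni] ni by simp
  have g1: "g k i \<le> g k (i - 1)" for k i unfolding g_def using zdiv_mono1[of "i - 1 - \<sigma> k" "i - \<sigma> k" ni] ni by simp
  have f2: "f k (i + int n) = f k i - 1" for k i
  proof -
    have "(i + int n - \<rho> k) div ni = ((i - \<rho> k) + ni) div ni" unfolding ni_def by (simp add: algebra_simps)
    also have "\<dots> = (i - \<rho> k) div ni + 1" using ni by simp
    finally show ?thesis unfolding f_def by simp
  qed
  have g2: "g k (i + int n) = g k i - 1" for k i
  proof -
    have "(i + int n - \<sigma> k) div ni = ((i - \<sigma> k) + ni) div ni" unfolding ni_def by (simp add: algebra_simps)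
    also have "\<dots> = (i - \<sigma> k) div ni + 1" using ni by simp
    finally show ?thesis unfolding g_def by simp
  qed
  define L where "L = (\<lambda>i. (Mon d (\<lambda>k. f k i) :: (nat \<Rightarrow> 'a fls) set))"
  define L' where "L' = (\<lambda>i. (Mon d (\<lambda>k. g k i) :: (nat \<Rightarrow> 'a fls) set))"
  have cL: "lchain n d L" unfolding L_def by (rule mon_chain) (rule f1, rule f2)
  have cL': "lchain n d L'" unfolding L'_def by (rule mon_chain) (rule g1, rule g2)
  have rp: "relpos L L' i j = C i j" for i j
  proof -
    define H where "H k = max (f k i) (g k j)" for k
    define H' where "H' k = min (max (f k (i - 1)) (g k j)) (max (f k i) (g k (j - 1)))" for k
    have e1: "L i \<inter> L' j = Mon d H" unfolding L_def L'_def H_def by (rule Mon_Int)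
    have e2: "sp (L (i - 1) \<inter> L' j) (L i \<inter> L' (j - 1)) = Mon d H'"
      unfolding L_def L'_def H'_def Mon_Int Mon_sp ..
    have HH: "\<And>k. k < d \<Longrightarrow> H k \<le> H' k"
    proof -
      fix k
      have "f k i \<le> f k (i - 1)" "g k j \<le> g k (j - 1)" by (rule f1, rule g1)
      then show "H k \<le> H' k" unfolding H_def H'_def by (simp add: max_def min_def)
    qed
    have "relpos L L' i j = qdim (Mon d H) (Mon d H' :: (nat \<Rightarrow> 'a fls) set)"
      unfolding relpos_sp e1 e2 ..
    also have "\<dots> = (\<Sum>k<d. nat (H' k - H k))"
      by (rule qdim_eq) (rule Mon_card[OF HH])
    also have "\<dots> = (\<Sum>k<d. if i - \<rho> k = j - \<sigma> k \<and> ni dvd (i - \<rho> k) then 1 else 0)"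
    proof (rule sum.cong[OF refl])
      fix k
      have "nat (H' k - H k) = nat (min (max (- (((i - \<rho> k) - 1) div ni)) (- ((j - \<sigma> k) div ni)))
               (max (- ((i - \<rho> k) div ni)) (- (((j - \<sigma> k) - 1) div ni))) - max (- ((i - \<rho> k) div ni)) (- ((j - \<sigma> k) div ni)))"
        unfolding H_def H'_def f_def g_def by (simp add: algebra_simps)
      also have "\<dots> = (if i - \<rho> k = j - \<sigma> k \<and> ni dvd (i - \<rho> k) then 1 else 0)" by (rule cnt[OF ni])
      finally show "nat (H' k - H k) = (if i - \<rho> k = j - \<sigma> k \<and> ni dvd (i - \<rho> k) then 1 else 0)" .
    qed
    also have "\<dots> = card {k. k < d \<and> (i - \<rho> k = j - \<sigma> k \<and> ni dvd (i - \<rho> k))}"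
      by (simp add: sum.If_cases Int_def lessThan_def conj_commute)
    also have "\<dots> = C i j"
    proof -
      define q where "q = (i - 1) div ni"
      define i0 where "i0 = i - q * ni"
      define j0 where "j0 = j - q * ni"
      have i0b: "1 \<le> i0 \<and> i0 \<le> ni"
      proof -
        have "i - 1 = (i - 1) mod ni + q * ni" unfolding q_def by simp
        then have "i0 = (i - 1) mod ni + 1" unfolding i0_def by simp
        then show ?thesis using ni pos_mod_sign[OF ni, of "i - 1"] pos_mod_bound[OF ni, of "i - 1"] by simp
      qed
      have iff: "(i - \<rho> k = j - \<sigma> k \<and> ni dvd (i - \<rho> k)) \<longleftrightarrow> xs ! k = (i0, j0)" if k: "k < d" for k
      proof -
        have rb: "1 \<le> \<rho> k \<and> \<rho> k \<le> ni" using \<rho>b[OF k] .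
        have "ni dvd (i - \<rho> k) \<longleftrightarrow> ni dvd (i0 - \<rho> k)"
        proof -
          have "i - \<rho> k = (i0 - \<rho> k) + q * ni" unfolding i0_def by simp
          then show ?thesis by (metis dvd_add_times_triv_right_iff)
        qed
        also have "\<dots> \<longleftrightarrow> i0 = \<rho> k"
        proof
          assume "ni dvd (i0 - \<rho> k)"
          then obtain c where c: "i0 - \<rho> k = ni * c" by (auto elim: dvdE)
          have "c < 1"
          proof (rule ccontr)
            assume "\<not> c < 1"
            then have "ni * 1 \<le> ni * c" using ni by (intro mult_left_mono) auto
            then show False using c i0b rb by linarith
          qed
          moreover have "-1 < c"
          proof (rule ccontr)
            assume "\<not> -1 < c"
            then have "ni * c \<le> ni * (-1)" using ni by (intro mult_left_mono) auto
            then show False using c i0b rb by linarith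
          qed
          ultimately have "c = 0" by simp
          then show "i0 = \<rho> k" using c by simp
        qed simp
        finally have "ni dvd (i - \<rho> k) \<longleftrightarrow> i0 = \<rho> k" .
        then show ?thesis unfolding \<rho>_def \<sigma>_def i0_def j0_def by (cases "xs ! k") auto
      qed
      have "{k. k < d \<and> (i - \<rho> k = j - \<sigma> k \<and> ni dvd (i - \<rho> k))} = {k. k < d \<and> xs ! k = (i0, j0)}"
        using iff by blast
      then have "card {k. k < d \<and> (i - \<rho> k = j - \<sigma> k \<and> ni dvd (i - \<rho> k))} = count M (i0, j0)"
        using card_xs by simp
      also have "\<dots> = C i0 j0" using cM[of "(i0, j0)"] i0b unfolding supp_def ni_def by auto
      also have "\<dots> = C (i0 + q * int n) (j0 + q * int n)" by (rule Xi_per[OF XiC, symmetric])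
      also have "\<dots> = C i j" unfolding i0_def j0_def ni_def by simp
      finally show ?thesis .
    qed
    finally show ?thesis .
  qed
  have "relpos L L' = C" using rp by (simp add: fun_eq_iff)
  then show ?thesis using cL cL' by (intro exI[of _ "(L, L')"]) simp
qed

theorem mainTheorem5:
  fixes n d :: nat and A B C :: "int \<Rightarrow> int \<Rightarrow> nat" and \<alpha> \<beta> :: "int \<Rightarrow> nat"
    and F :: "'a::{field,finite} itself"
  assumes "n \<ge> 1"
    and "Xi n d A" and "Xi n d B" and "Xi n d C"
    and "B = (\<lambda>r s. \<Sum>j = 1..int n. \<beta> j * Emat n j j r s + \<alpha> j * Emat n j (j + 1) r s)
       \<or> B = (\<lambda>r s. \<Sum>j = 1..int n. \<beta> j * Emat n j j r s + \<alpha> j * Emat n (j + 1) j r s)"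
    and "struct_count F n d B A C \<noteq> 0"
  shows "\<forall>i::int. eps C i = eps A i + eps B i"
proof -
  define P where "P = (SOME P :: (int \<Rightarrow> (nat \<Rightarrow> 'a fls) set) \<times> (int \<Rightarrow> (nat \<Rightarrow> 'a fls) set).
                 lchain n d (fst P) \<and> lchain n d (snd P) \<and> relpos (fst P) (snd P) = C)"
  have hP: "lchain n d (fst P) \<and> lchain n d (snd P) \<and> relpos (fst P) (snd P) = C"
    unfolding P_def by (rule someI_ex[OF realize[OF assms(1) assms(4)]])
  have "card {L''. lchain n d L'' \<and> relpos (fst P) L'' = B \<and> relpos L'' (snd P) = A} \<noteq> 0"
    using assms(6) unfolding struct_count_def P_def Let_def by simp
  then obtain L'' where L'': "lchain n d L''" "relpos (fst P) L'' = B" "relpos L'' (snd P) = A"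
    by (metis (mono_tags, lifting) card.empty empty_Collect_eq)
  show ?thesis
  proof
    fix i :: int
    have "eps (relpos (fst P) (snd P)) i = eps (relpos L'' (snd P)) i + eps (relpos (fst P) L'') i"
      using hP L''(1) by (intro eps_add) auto
    then show "eps C i = eps A i + eps B i" using hP L'' by simp
  qed
qed

end
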